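(* In the two-player, two-item all-pay auction with budgets described in the context, the marginal strategies $F_{1j},F_{2j}$ induced on an item $j$ by a Nash equilibrium of the two-item game need not constitute a Nash equilibrium of the single-item game on item $j$ (the single-item all-pay auction with budgets $B_1,B_2$, valuations $v_{1j},v_{2j}$, and the same tie-breaking rule). That is, there exist a two-item game, a Nash equilibrium of it, and an item $j\in\{1,2\}$ for which the induced marginals on item $j$ are not a Nash equilibrium of that single-item game.
   Context: Multi-item all-pay auction with budgets. Two players $i\in\{1,2\}$ ($-i$ is the opponent of $i$) and $n$ items $j\in\{1,\dots,n\}$. Player $i$ has budget $B_i\ge0$ and values item $j$ at $v_{ij}>0$. A pure strategy of player $i$ is a vector $(x_{i1},\dots,x_{in})$ with all $x_{ij}\ge0$ and $\sum_j x_{ij}\le B_i$; a mixed strategy is a probability distribution over this set, and $F_{ij}$ denotes its marginal distribution on item $j$. On each item $j$ the higher bid wins the item. Tie-breaking on item $j$: if $x_{1j}=x_{2j}=\min\{B_1,B_2,v_{1j},v_{2j}\}$ and $\min\{B_i,v_{ij}\}>\min\{B_{-i},v_{-ij}\}$ for some $i$, then player $i$ wins item $j$; in all other ties each player wins item $j$ with probability $\frac12$. Player $i$'s utility on item $j$ is $v_{ij}-x_{ij}$ if he wins it and $-x_{ij}$ otherwise, and his total utility is the sum over items. A Nash equilibrium is a pair of mixed strategies in which each player's strategy maximizes his expected total utility against the other's, over all mixed strategies satisfying his budget constraint. The single-item game on item $j$ is the case $n=1$ with valuations $v_{1j},v_{2j}$ and budgets $B_1,B_2$ (pure strategies are bids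 in $[0,B_i]$). Here $n=2$. *)

theory Defs
  imports "HOL-Probability.Probability"
begin

text \<open>Probability that player 1 wins an item, given budgets B1 B2, the two
players' valuations w1 w2 of this item, player 1's bid x and player 2's bid y
(including the tie-breaking rule).\<close>
definition win1 :: "real \<Rightarrow> real \<Rightarrow> real \<Rightarrow> real \<Rightarrow> real \<Rightarrow> real \<Rightarrow> real" where
  "win1 B1 B2 w1 w2 x y =
     (if y < x then 1
      else if x < y then 0
      else if x = min B1 (min B2 (min w1 w2)) \<and> min B2 w2 < min B1 w1 then 1
      else if x = min B1 (min B2 (min w1 w2)) \<and> min B1 w1 < min B2 w2 then 0
      else 1/2)"

definition util1_single :: "real \<Rightarrow> real \<Rightarrow> real \<Rightarrow> real \<Rightarrow> real \<Rightarrow> real \<Rightarrow> real" where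
  "util1_single B1 B2 w1 w2 x y = w1 * win1 B1 B2 w1 w2 x y - x"

definition util2_single :: "real \<Rightarrow> real \<Rightarrow> real \<Rightarrow> real \<Rightarrow> real \<Rightarrow> real \<Rightarrow> real" where
  "util2_single B1 B2 w1 w2 x y = w2 * (1 - win1 B1 B2 w1 w2 x y) - y"

text \<open>Two-item game: pure strategies are pairs (bid on item 1, bid on item 2).
 v11 v12: valuations of player 1; v21 v22: valuations of player 2.\<close>
definition util1_two :: "real \<Rightarrow> real \<Rightarrow> real \<Rightarrow> real \<Rightarrow> real \<Rightarrow> real \<Rightarrow>
    real \<times> real \<Rightarrow> real \<times> real \<Rightarrow> real" where
  "util1_two B1 B2 v11 v12 v21 v22 x y =
     util1_single B1 B2 v11 v21 (fst x) (fst y) + util1_single B1 B2 v12 v22 (snd x) (snd y)"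

definition util2_two :: "real \<Rightarrow> real \<Rightarrow> real \<Rightarrow> real \<Rightarrow> real \<Rightarrow> real \<Rightarrow>
    real \<times> real \<Rightarrow> real \<times> real \<Rightarrow> real" where
  "util2_two B1 B2 v11 v12 v21 v22 x y =
     util2_single B1 B2 v11 v21 (fst x) (fst y) + util2_single B1 B2 v12 v22 (snd x) (snd y)"

definition mixed_single :: "real \<Rightarrow> real measure \<Rightarrow> bool" where
  "mixed_single B M \<longleftrightarrow> prob_space M \<and> sets M = sets borel \<and>
     (AE x in M. 0 \<le> x \<and> x \<le> B)"

definition mixed_two :: "real \<Rightarrow> (real \<times> real) measure \<Rightarrow> bool" where
  "mixed_two B M \<longleftrightarrow> prob_space M \<and> sets M = sets borel \<and>
     (AE x in M. 0 \<le> fst x \<and> 0 \<le> snd x \<and> fst x + snd x \<le> B)"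

definition exp_util :: "('a \<Rightarrow> 'b \<Rightarrow> real) \<Rightarrow> 'a measure \<Rightarrow> 'b measure \<Rightarrow> real" where
  "exp_util u M1 M2 = (\<integral>z. u (fst z) (snd z) \<partial>(M1 \<Otimes>\<^sub>M M2))"

definition nash :: "('a measure \<Rightarrow> bool) \<Rightarrow> ('b measure \<Rightarrow> bool) \<Rightarrow>
    ('a \<Rightarrow> 'b \<Rightarrow> real) \<Rightarrow> ('a \<Rightarrow> 'b \<Rightarrow> real) \<Rightarrow> 'a measure \<Rightarrow> 'b measure \<Rightarrow> bool" where
  "nash S1 S2 u1 u2 M1 M2 \<longleftrightarrow> S1 M1 \<and> S2 M2 \<and>
     (\<forall>N. S1 N \<longrightarrow> exp_util u1 N M2 \<le> exp_util u1 M1 M2) \<and>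
     (\<forall>N. S2 N \<longrightarrow> exp_util u2 M1 N \<le> exp_util u2 M1 M2)"

definition nash_two :: "real \<Rightarrow> real \<Rightarrow> real \<Rightarrow> real \<Rightarrow> real \<Rightarrow> real \<Rightarrow>
    (real \<times> real) measure \<Rightarrow> (real \<times> real) measure \<Rightarrow> bool" where
  "nash_two B1 B2 v11 v12 v21 v22 =
     nash (mixed_two B1) (mixed_two B2)
       (util1_two B1 B2 v11 v12 v21 v22) (util2_two B1 B2 v11 v12 v21 v22)"

definition nash_single :: "real \<Rightarrow> real \<Rightarrow> real \<Rightarrow> real \<Rightarrow>
    real measure \<Rightarrow> real measure \<Rightarrow> bool" where
  "nash_single B1 B2 w1 w2 =
     nash (mixed_single B1) (mixed_single B2)
       (util1_single B1 B2 w1 w2) (util2_single B1 B2 w1 w2)"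

definition marginal :: "(real \<times> real) measure \<Rightarrow> nat \<Rightarrow> real measure" where
  "marginal M j = distr M borel (if j = 1 then fst else snd)"

end

theory Submission
  imports Defs
begin

lemma win1_meas[measurable]:
  "(\<lambda>z. win1 B1 B2 w1 w2 (f z) (g z)) \<in> borel_measurable M"
  if [measurable]: "f \<in> borel_measurable M" "g \<in> borel_measurable M"
  unfolding win1_def by measurable

lemma u1_meas0: "(\<lambda>z. util1_two B1 B2 a b c d (fst z) (snd z)) \<in> borel_measurable ((borel \<Otimes>\<^sub>M borel) \<Otimes>\<^sub>M (borel \<Otimes>\<^sub>M borel))"
  unfolding util1_two_def util1_single_def by measurable
lemma u1_meas: "(\<lambda>z. util1_two B1 B2 a b c d (fst z) (snd z)) \<in> borel_measurable (borel \<Otimes>\<^sub>M borel)"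
  using u1_meas0 by (simp add: borel_prod)
lemma u2_meas0: "(\<lambda>z. util2_two B1 B2 a b c d (fst z) (snd z)) \<in> borel_measurable ((borel \<Otimes>\<^sub>M borel) \<Otimes>\<^sub>M (borel \<Otimes>\<^sub>M borel))"
  unfolding util2_two_def util2_single_def by measurable
lemma u2_meas: "(\<lambda>z. util2_two B1 B2 a b c d (fst z) (snd z)) \<in> borel_measurable (borel \<Otimes>\<^sub>M borel)"
  using u2_meas0 by (simp add: borel_prod)

definition U where "U = uniform_measure lborel {0..1::real}"

lemma U_prob: "prob_space U"
  unfolding U_def by (rule prob_space_uniform_measure) auto
lemma sets_U[simp]: "sets U = sets borel"
  unfolding U_def by simp
lemma space_U[simp]: "space U = UNIV"
  unfolding U_def by simp
lemma AE_U: "AE w in U. 0 \<le> w \<and> w \<le> 1 \<and> w \<noteq> c"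
  unfolding U_def
  apply (subst AE_uniform_measure) apply auto
  using AE_lborel_singleton[of c] by eventually_elim auto

lemma int_lt: assumes "0 \<le> a" "a \<le> 1" shows "(\<integral>w. indicator {..<a} w \<partial>U) = (a::real)"
proof -
  interpret prob_space U by (rule U_prob)
  have ii: "\<And>A. A \<in> sets U \<Longrightarrow> integrable U (indicator A :: real \<Rightarrow> real)"
    by (rule integrable_real_indicator) (auto simp: emeasure_eq_measure)
  have "(\<integral>w. indicator {..<a} w \<partial>U) = measure U {..<a}"
    by (simp add: integral_indicator)
  also have "\<dots> = a" unfolding U_def using assms
    apply (subst measure_uniform_measure) apply auto
    apply (subgoal_tac "{0..1} \<inter> {..<a} = {0..<a}")
    apply (auto simp: measure_def)
    done
  finally show ?thesis .
qed

lemma int_gt: assumes "0 \<le> a" "a \<le> 1" shows "(\<integral>w. indicator {a<..} w \<partial>U) = 1 - (a::real)"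
proof -
  interpret prob_space U by (rule U_prob)
  have ii: "\<And>A. A \<in> sets U \<Longrightarrow> integrable U (indicator A :: real \<Rightarrow> real)"
    by (rule integrable_real_indicator) (auto simp: emeasure_eq_measure)
  have "(\<integral>w. indicator {a<..} w \<partial>U) = measure U {a<..}"
    by (simp add: integral_indicator)
  also have "\<dots> = 1 - a" unfolding U_def using assms
    apply (subst measure_uniform_measure) apply auto
    apply (subgoal_tac "{0..1} \<inter> {a<..} = {a<..1}")
    apply (auto simp: measure_def)
    done
  finally show ?thesis .
qed

lemma win1_bounds: "0 \<le> win1 B1 B2 w1 w2 x y" "win1 B1 B2 w1 w2 x y \<le> 1"
  unfolding win1_def by auto

lemma exp_util_fubini:
  assumes A: "prob_space A" and B: "prob_space B" and sA: "sets A = sets borel" and sB: "sets B = sets borel"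
    and m: "(\<lambda>z. u (fst z) (snd z)) \<in> borel_measurable (borel \<Otimes>\<^sub>M borel)"
    and bd: "AE z in A \<Otimes>\<^sub>M B. \<bar>u (fst z) (snd z)\<bar> \<le> (C::real)"
  shows "exp_util u A B = (\<integral>x. (\<integral>y. u x y \<partial>B) \<partial>A)"
    and "exp_util u A B = (\<integral>y. (\<integral>x. u x y \<partial>A) \<partial>B)"
    and "(\<lambda>x. (\<integral>y. u x y \<partial>B)) \<in> borel_measurable A"
    and "(\<lambda>y. (\<integral>x. u x y \<partial>A)) \<in> borel_measurable B"
proof -
  interpret pair_prob_space A B using A B by (simp add: pair_prob_space_def pair_sigma_finite_def prob_space_imp_sigma_finite)
  have m': "(\<lambda>z. u (fst z) (snd z)) \<in> borel_measurable (A \<Otimes>\<^sub>M B)"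
    using m measurable_cong_sets[OF sets_pair_measure_cong[OF sA sB] refl] by blast
  have int: "integrable (A \<Otimes>\<^sub>M B) (\<lambda>z. u (fst z) (snd z))"
    using bd m' by (intro P.integrable_const_bound[of _ C]) auto
  show "exp_util u A B = (\<integral>x. (\<integral>y. u x y \<partial>B) \<partial>A)"
    unfolding exp_util_def using integral_fst'[OF int] by simp
  have cp: "case_prod u = (\<lambda>z. u (fst z) (snd z))" by (simp add: fun_eq_iff split_beta)
  show "exp_util u A B = (\<integral>y. (\<integral>x. u x y \<partial>A) \<partial>B)"
    unfolding exp_util_def using integral_snd[of u] int cp by simp
  show "(\<lambda>x. (\<integral>y. u x y \<partial>B)) \<in> borel_measurable A"
    using m' cp by (intro M2.borel_measurable_lebesgue_integral) simp
  have sw: "(\<lambda>z. (snd z, fst z)) \<in> measurable (borel \<Otimes>\<^sub>M borel) (borel \<Otimes>\<^sub>M borel :: ('a \<times> 'b) measure)"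
    by measurable
  have "(\<lambda>z. u (snd z) (fst z)) \<in> borel_measurable (borel \<Otimes>\<^sub>M borel)"
    using measurable_compose[OF sw m] by (simp add: comp_def)
  then have "(\<lambda>z. u (snd z) (fst z)) \<in> borel_measurable (B \<Otimes>\<^sub>M A)"
    using measurable_cong_sets[OF sets_pair_measure_cong[OF sB sA] refl] by blast
  moreover have "case_prod (\<lambda>y x. u x y) = (\<lambda>z. u (snd z) (fst z))" by (simp add: fun_eq_iff split_beta)
  ultimately show "(\<lambda>y. (\<integral>x. u x y \<partial>A)) \<in> borel_measurable B"
    by (intro M1.borel_measurable_lebesgue_integral) simp
qed

lemma AE_prod:
  assumes A: "prob_space A" and B: "prob_space B" and sA: "sets A = sets borel" and sB: "sets B = sets borel"
    and P: "AE x in A. P x" and Q: "AE y in B. Q y"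
    and pm: "Measurable.pred (borel \<Otimes>\<^sub>M borel) (\<lambda>z. P (fst z) \<and> Q (snd z))"
  shows "AE z in A \<Otimes>\<^sub>M B. P (fst z) \<and> Q (snd z)"
proof -
  interpret pair_prob_space A B using A B by (simp add: pair_prob_space_def pair_sigma_finite_def prob_space_imp_sigma_finite)
  have pm': "Measurable.pred (A \<Otimes>\<^sub>M B) (\<lambda>z. P (fst z) \<and> Q (snd z))"
    using pm measurable_cong_sets[OF sets_pair_measure_cong[OF sA sB] refl] by blast
  show ?thesis
    apply (rule AE_pair_measure)
    using pm' apply (simp add: pred_def)
    using P by (rule eventually_mono) (use Q in \<open>auto elim: eventually_mono\<close>)
qed

definition M where "M = distr U borel (\<lambda>u. (u, 1 - u))"

lemma g_meas[measurable]: "(\<lambda>u::real. (u, 1 - u)) \<in> measurable U borel"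
proof -
  have "(\<lambda>u::real. (u, 1 - u)) \<in> measurable borel (borel \<Otimes>\<^sub>M borel)" by measurable
  then have "(\<lambda>u::real. (u, 1 - u)) \<in> measurable borel borel" by (simp add: borel_prod)
  then show ?thesis using measurable_cong_sets[OF sets_U refl, of "borel :: (real\<times>real) measure"] by simp
qed

lemma M_prob: "prob_space M"
  unfolding M_def by (rule prob_space.prob_space_distr[OF U_prob]) simp
lemma sets_M[simp]: "sets M = sets borel" unfolding M_def by simp

lemma AE_M: "AE x in M. \<exists>w. 0 \<le> w \<and> w \<le> 1 \<and> x = (w, 1 - w)"
proof -
  have pm: "Measurable.pred (borel \<Otimes>\<^sub>M borel) (\<lambda>x::real\<times>real. 0 \<le> fst x \<and> fst x \<le> 1 \<and> snd x = 1 - fst x)"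
    by measurable
  have "AE x in M. 0 \<le> fst x \<and> fst x \<le> 1 \<and> snd x = 1 - fst x"
    unfolding M_def
    apply (subst AE_distr_iff)
      apply simp
    using pm apply (simp add: borel_prod pred_def)
    using AE_U[of 0] by eventually_elim auto
  then show ?thesis by eventually_elim (metis prod.collapse)
qed

lemma mixed_M: "mixed_two 1 M"
  unfolding mixed_two_def using M_prob AE_M by (auto elim!: eventually_mono)

declare sets_U[measurable_cong]

lemma u1_sec[measurable]: "(\<lambda>y. util1_two B1 B2 a b c d x y) \<in> borel_measurable borel"
proof -
  have "(\<lambda>y. util1_two B1 B2 a b c d x y) \<in> borel_measurable (borel \<Otimes>\<^sub>M borel)"
    unfolding util1_two_def util1_single_def by measurable
  then show ?thesis by (simp add: borel_prod)
qed

lemma u2_sec[measurable]: "(\<lambda>x. util2_two B1 B2 a b c d x y) \<in> borel_measurable borel"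
proof -
  have "(\<lambda>x. util2_two B1 B2 a b c d x y) \<in> borel_measurable (borel \<Otimes>\<^sub>M borel)"
    unfolding util2_two_def util2_single_def by measurable
  then show ?thesis by (simp add: borel_prod)
qed

abbreviation "u1 \<equiv> util1_two 1 1 2 2 1 1"
abbreviation "u2 \<equiv> util2_two 1 1 2 2 1 1"

lemma inner1:
  assumes "0 \<le> fst x" "fst x \<le> 1" "0 \<le> snd x" "snd x \<le> 1"
  shows "(\<integral>y. u1 x y \<partial>M) = fst x + snd x"
proof -
  interpret prob_space U by (rule U_prob)
  have ii: "\<And>A. A \<in> sets U \<Longrightarrow> integrable U (indicator A :: real \<Rightarrow> real)"
    by (rule integrable_real_indicator) (auto simp: emeasure_eq_measure)
  have "(\<integral>y. u1 x y \<partial>M) = (\<integral>w. u1 x (w, 1 - w) \<partial>U)"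
    unfolding M_def by (rule integral_distr) simp_all
  also have "\<dots> = (\<integral>w. (2 * indicator {..<fst x} w - fst x) + (2 * indicator {1 - snd x<..} w - snd x) \<partial>U)"
  proof (rule integral_cong_AE)
    show "(\<lambda>w. u1 x (w, 1 - w)) \<in> borel_measurable U"
      unfolding util1_two_def util1_single_def by measurable
    show "(\<lambda>w. (2 * indicator {..<fst x} w - fst x) + (2 * indicator {1 - snd x<..} w - snd x)) \<in> borel_measurable U"
      by measurable
    show "AE w in U. u1 x (w, 1 - w) = (2 * indicator {..<fst x} w - fst x) + (2 * indicator {1 - snd x<..} w - snd x)"
      using AE_U[of "fst x"] AE_U[of "1 - snd x"]
      by eventually_elim (auto simp: util1_two_def util1_single_def win1_def split: split_indicator)
  qed
  also have "\<dots> = fst x + snd x"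
  proof -
    have p1: "prob {..<fst x} = fst x" using int_lt[of "fst x"] assms by simp
    have p2: "prob {1 - snd x<..} = snd x" using int_gt[of "1 - snd x"] assms by simp
    have pU: "prob UNIV = 1" using prob_space by simp
    show ?thesis using assms by (simp add: ii integral_add integral_diff p1 p2 pU)
  qed
  finally show ?thesis .
qed

lemma inner2:
  assumes "0 \<le> fst y" "fst y \<le> 1" "0 \<le> snd y" "snd y \<le> 1"
  shows "(\<integral>x. u2 x y \<partial>M) = 0"
proof -
  interpret prob_space U by (rule U_prob)
  have ii: "\<And>A. A \<in> sets U \<Longrightarrow> integrable U (indicator A :: real \<Rightarrow> real)"
    by (rule integrable_real_indicator) (auto simp: emeasure_eq_measure)
  have "(\<integral>x. u2 x y \<partial>M) = (\<integral>w. u2 (w, 1 - w) y \<partial>U)"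
    unfolding M_def by (rule integral_distr) simp_all
  also have "\<dots> = (\<integral>w. (indicator {..<fst y} w - fst y) + (indicator {1 - snd y<..} w - snd y) \<partial>U)"
  proof (rule integral_cong_AE)
    show "(\<lambda>w. u2 (w, 1 - w) y) \<in> borel_measurable U"
      unfolding util2_two_def util2_single_def by measurable
    show "(\<lambda>w. (indicator {..<fst y} w - fst y) + (indicator {1 - snd y<..} w - snd y)) \<in> borel_measurable U"
      by measurable
    show "AE w in U. u2 (w, 1 - w) y = (indicator {..<fst y} w - fst y) + (indicator {1 - snd y<..} w - snd y)"
      using AE_U[of "fst y"] AE_U[of "1 - snd y"]
      by eventually_elim (auto simp: util2_two_def util2_single_def win1_def split: split_indicator)
  qed
  also have "\<dots> = 0"
  proof -
    have p1: "prob {..<fst y} = fst y" using int_lt[of "fst y"] assms by simp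
    have p2: "prob {1 - snd y<..} = snd y" using int_gt[of "1 - snd y"] assms by simp
    have pU: "prob UNIV = 1" using prob_space by simp
    show ?thesis using assms by (simp add: ii integral_add integral_diff p1 p2 pU)
  qed
  finally show ?thesis .
qed

abbreviation "bud (x::real\<times>real) \<equiv> 0 \<le> fst x \<and> 0 \<le> snd x \<and> fst x + snd x \<le> 1"

lemma bud_pred: "Measurable.pred (borel \<Otimes>\<^sub>M borel) (\<lambda>z::(real\<times>real)\<times>(real\<times>real). bud (fst z) \<and> bud (snd z))"
proof -
  have "Measurable.pred ((borel \<Otimes>\<^sub>M borel) \<Otimes>\<^sub>M (borel \<Otimes>\<^sub>M borel)) (\<lambda>z::(real\<times>real)\<times>(real\<times>real). bud (fst z) \<and> bud (snd z))"
    by measurable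
  then show ?thesis by (simp add: borel_prod)
qed

lemma u1_bound: "bud x \<Longrightarrow> bud y \<Longrightarrow> \<bar>u1 x y\<bar> \<le> 6"
  unfolding util1_two_def util1_single_def
  using win1_bounds[of 1 1 2 1 "fst x" "fst y"] win1_bounds[of 1 1 2 1 "snd x" "snd y"]
  by (simp add: abs_le_iff)

lemma u2_bound: "bud x \<Longrightarrow> bud y \<Longrightarrow> \<bar>u2 x y\<bar> \<le> 6"
  unfolding util2_two_def util2_single_def
  using win1_bounds[of 1 1 2 1 "fst x" "fst y"] win1_bounds[of 1 1 2 1 "snd x" "snd y"]
  by (simp add: abs_le_iff)

lemma fs_meas: "(\<lambda>x::real\<times>real. fst x + snd x) \<in> borel_measurable borel"
  by (intro borel_measurable_continuous_onI continuous_intros)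

lemma p1_gen:
  assumes N: "mixed_two 1 N"
  shows "exp_util u1 N M = (\<integral>x. fst x + snd x \<partial>N)"
proof -
  have Np: "prob_space N" and Ns: "sets N = sets borel" and Na: "AE x in N. bud x"
    using N unfolding mixed_two_def by auto
  have Ma: "AE y in M. bud y" using mixed_M unfolding mixed_two_def by auto
  have ae: "AE z in N \<Otimes>\<^sub>M M. bud (fst z) \<and> bud (snd z)"
    by (rule AE_prod[OF Np M_prob Ns sets_M Na Ma bud_pred])
  have bd: "AE z in N \<Otimes>\<^sub>M M. \<bar>u1 (fst z) (snd z)\<bar> \<le> 6"
    using ae by eventually_elim (simp add: u1_bound)
  note F = exp_util_fubini[OF Np M_prob Ns sets_M u1_meas bd]
  have "exp_util u1 N M = (\<integral>x. (\<integral>y. u1 x y \<partial>M) \<partial>N)" by (rule F(1))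
  also have "\<dots> = (\<integral>x. fst x + snd x \<partial>N)"
  proof (rule integral_cong_AE)
    show "(\<lambda>x. \<integral>y. u1 x y \<partial>M) \<in> borel_measurable N" by (rule F(3))
    show "(\<lambda>x. fst x + snd x) \<in> borel_measurable N"
      using measurable_cong_sets[OF Ns refl, of "borel :: real measure"] fs_meas by simp
    show "AE x in N. (\<integral>y. u1 x y \<partial>M) = fst x + snd x"
      using Na by eventually_elim (rule inner1, auto)
  qed
  finally show ?thesis .
qed

lemma p2_gen:
  assumes N: "mixed_two 1 N"
  shows "exp_util u2 M N = 0"
proof -
  have Np: "prob_space N" and Ns: "sets N = sets borel" and Na: "AE x in N. bud x"
    using N unfolding mixed_two_def by auto
  have Ma: "AE y in M. bud y" using mixed_M unfolding mixed_two_def by auto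
  have ae: "AE z in M \<Otimes>\<^sub>M N. bud (fst z) \<and> bud (snd z)"
    by (rule AE_prod[OF M_prob Np sets_M Ns Ma Na bud_pred])
  have bd: "AE z in M \<Otimes>\<^sub>M N. \<bar>u2 (fst z) (snd z)\<bar> \<le> 6"
    using ae by eventually_elim (simp add: u2_bound)
  note F = exp_util_fubini[OF M_prob Np sets_M Ns u2_meas bd]
  have "exp_util u2 M N = (\<integral>y. (\<integral>x. u2 x y \<partial>M) \<partial>N)" by (rule F(2))
  also have "\<dots> = (\<integral>y. 0 \<partial>N)"
  proof (rule integral_cong_AE)
    show "(\<lambda>y. \<integral>x. u2 x y \<partial>M) \<in> borel_measurable N" by (rule F(4))
    show "(\<lambda>x. 0::real) \<in> borel_measurable N" by simp
    show "AE y in N. (\<integral>x. u2 x y \<partial>M) = 0"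
      using Na by eventually_elim (rule inner2, auto)
  qed
  finally show ?thesis by simp
qed

lemma nash_two_M: "nash_two 1 1 2 2 1 1 M M"
proof -
  have eq: "exp_util u1 M M = 1"
  proof -
    have "exp_util u1 M M = (\<integral>x. fst x + snd x \<partial>M)" by (rule p1_gen[OF mixed_M])
    also have "\<dots> = (\<integral>x. 1 \<partial>M)"
      apply (rule integral_cong_AE)
        apply (simp add: measurable_cong_sets[OF sets_M refl, of "borel :: real measure"] fs_meas)
       apply (simp add: measurable_cong_sets[OF sets_M refl, of "borel :: real measure"])
      using AE_M by eventually_elim auto
    also have "\<dots> = 1" using prob_space.prob_space[OF M_prob] by simp
    finally show ?thesis .
  qed
  have le: "exp_util u1 N M \<le> 1" if N: "mixed_two 1 N" for N
  proof -
    have Np: "prob_space N" and Na: "AE x in N. bud x"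
      using N unfolding mixed_two_def by auto
    interpret prob_space N by (rule Np)
    have "(\<integral>x. fst x + snd x \<partial>N) \<le> (\<integral>x. 1 \<partial>N)"
      by (rule integral_mono_AE') (use Na in \<open>auto elim: eventually_mono\<close>)
    then show ?thesis using p1_gen[OF N] prob_space by simp
  qed
  show ?thesis
    unfolding nash_two_def nash_def
    using mixed_M eq le p2_gen mixed_M by auto
qed

lemma fst_meas: "fst \<in> borel_measurable (borel :: (real\<times>real) measure)"
  by (intro borel_measurable_continuous_onI continuous_intros)

lemma marg_M: "marginal M 1 = U"
proof -
  have "marginal M 1 = distr U borel (fst \<circ> (\<lambda>u::real. (u, 1 - u)))"
    unfolding marginal_def M_def if_P[OF refl] by (rule distr_distr[OF fst_meas g_meas])
  also have "\<dots> = distr U borel (\<lambda>u. u)" by (simp add: comp_def)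
  also have "\<dots> = U" by (rule distr_id2) simp
  finally show ?thesis .
qed

abbreviation "us \<equiv> util1_single 1 1 2 1"

lemma us_meas: "(\<lambda>z. us (fst z) (snd z)) \<in> borel_measurable (borel \<Otimes>\<^sub>M borel)"
  unfolding util1_single_def by measurable

lemma inner_s:
  assumes "0 \<le> a" "a \<le> 1"
  shows "(\<integral>w. us a w \<partial>U) = a"
proof -
  interpret prob_space U by (rule U_prob)
  have "(\<integral>w. us a w \<partial>U) = (\<integral>w. 2 * indicator {..<a} w - a \<partial>U)"
  proof (rule integral_cong_AE)
    show "(\<lambda>w. us a w) \<in> borel_measurable U"
      unfolding util1_single_def by measurable
    show "(\<lambda>w. 2 * indicator {..<a} w - a) \<in> borel_measurable U"
      by measurable
    show "AE w in U. us a w = 2 * indicator {..<a} w - a"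
      using AE_U[of a]
      by eventually_elim (auto simp: util1_single_def win1_def split: split_indicator)
  qed
  also have "\<dots> = a"
  proof -
    have ii: "integrable U (indicator {..<a} :: real \<Rightarrow> real)"
      by (rule integrable_real_indicator) (auto simp: emeasure_eq_measure)
    have p1: "prob {..<a} = a" using int_lt[of a] assms by simp
    have pU: "prob UNIV = 1" using prob_space by simp
    show ?thesis using ii by (simp add: integral_diff p1 pU)
  qed
  finally show ?thesis .
qed

lemma us_bound: "0 \<le> a \<Longrightarrow> a \<le> 1 \<Longrightarrow> 0 \<le> w \<Longrightarrow> w \<le> 1 \<Longrightarrow> \<bar>us a w\<bar> \<le> 3"
  unfolding util1_single_def using win1_bounds[of 1 1 2 1 a w] by (simp add: abs_le_iff)

lemma eqm_single: "exp_util us U U \<le> 3/4"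
proof -
  interpret prob_space U by (rule U_prob)
  have pr: "Measurable.pred (borel \<Otimes>\<^sub>M borel) (\<lambda>z::real\<times>real. (0 \<le> fst z \<and> fst z \<le> 1) \<and> (0 \<le> snd z \<and> snd z \<le> 1))"
    by measurable
  have ae: "AE z in U \<Otimes>\<^sub>M U. (0 \<le> fst z \<and> fst z \<le> 1) \<and> (0 \<le> snd z \<and> snd z \<le> 1)"
    by (rule AE_prod[OF U_prob U_prob sets_U sets_U _ _ pr]) (use AE_U[of 0] in \<open>auto elim: eventually_mono\<close>)
  have bd: "AE z in U \<Otimes>\<^sub>M U. \<bar>us (fst z) (snd z)\<bar> \<le> 3"
    using ae by eventually_elim (simp add: us_bound)
  note F = exp_util_fubini[OF U_prob U_prob sets_U sets_U us_meas bd]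
  have "exp_util us U U = (\<integral>a. (\<integral>w. us a w \<partial>U) \<partial>U)" by (rule F(1))
  also have "\<dots> = (\<integral>a. a \<partial>U)"
  proof (rule integral_cong_AE)
    show "(\<lambda>a. \<integral>w. us a w \<partial>U) \<in> borel_measurable U" by (rule F(3))
    show "(\<lambda>a::real. a) \<in> borel_measurable U" by measurable
    show "AE a in U. (\<integral>w. us a w \<partial>U) = a"
      using AE_U[of 0] by eventually_elim (rule inner_s, auto)
  qed
  also have "\<dots> \<le> (\<integral>a. 1/2 + 1/2 * indicator {1/2<..} a \<partial>U)"
  proof (rule integral_mono_AE')
    have ii: "integrable U (indicator {1/2<..} :: real \<Rightarrow> real)"
      by (rule integrable_real_indicator) (auto simp: emeasure_eq_measure)
    show "integrable U (\<lambda>a::real. (1/2::real) + 1/2 * indicator {1/2<..} a)" using ii by simp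
    show "AE a in U. a \<le> 1/2 + 1/2 * indicator {1/2<..} a"
      using AE_U[of 0] by eventually_elim (auto split: split_indicator)
    show "AE a in U. 0 \<le> (1/2::real) + 1/2 * indicator {1/2<..} a"
      by (auto split: split_indicator)
  qed
  also have "\<dots> = 3/4"
  proof -
    have ii: "integrable U (indicator {1/2<..} :: real \<Rightarrow> real)"
      by (rule integrable_real_indicator) (auto simp: emeasure_eq_measure)
    have p1: "prob {1/2<..} = 1/2" using int_gt[of "1/2"] by simp
    have pU: "prob UNIV = 1" using prob_space by simp
    show ?thesis using ii by (simp add: integral_add p1 pU)
  qed
  finally show ?thesis .
qed

lemma dev_single: "exp_util us (return borel 1) U = 1"
proof -
  have R: "prob_space (return borel (1::real))" by (rule prob_space_return) simp
  have sr: "sets (return borel (1::real)) = sets borel" by simp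
  have a1: "AE x in return borel (1::real). x = 1" by (simp add: AE_return)
  have pr: "Measurable.pred (borel \<Otimes>\<^sub>M borel) (\<lambda>z::real\<times>real. (fst z = 1) \<and> (0 \<le> snd z \<and> snd z \<le> 1))"
    by measurable
  have ae: "AE z in return borel (1::real) \<Otimes>\<^sub>M U. (fst z = 1) \<and> (0 \<le> snd z \<and> snd z \<le> 1)"
    by (rule AE_prod[where P="\<lambda>x. x = 1" and Q="\<lambda>y. 0 \<le> y \<and> y \<le> 1", OF R U_prob sr sets_U _ _ pr]) (use a1 AE_U[of 0] in \<open>auto elim: eventually_mono\<close>)
  have bd: "AE z in return borel (1::real) \<Otimes>\<^sub>M U. \<bar>us (fst z) (snd z)\<bar> \<le> 3"
    using ae by eventually_elim (simp add: us_bound)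
  note F = exp_util_fubini[OF R U_prob sr sets_U us_meas bd]
  have "exp_util us (return borel 1) U = (\<integral>a. (\<integral>w. us a w \<partial>U) \<partial>return borel 1)" by (rule F(1))
  also have "\<dots> = (\<integral>w. us 1 w \<partial>U)"
    by (rule integral_return) (use F(3) in simp_all)
  also have "\<dots> = 1" by (rule inner_s) auto
  finally show ?thesis .
qed

theorem corollary1:
  shows "\<exists>B1 B2 v11 v12 v21 v22 M1 M2 (j::nat).
    0 \<le> B1 \<and> 0 \<le> B2 \<and> 0 < v11 \<and> 0 < v12 \<and> 0 < v21 \<and> 0 < v22 \<and>
    nash_two B1 B2 v11 v12 v21 v22 M1 M2 \<and> j \<in> {1, 2} \<and>
    \<not> nash_single B1 B2 (if j = 1 then v11 else v12) (if j = 1 then v21 else v22)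
        (marginal M1 j) (marginal M2 j)"
proof -
  have ms: "mixed_single 1 (return borel 1)"
    unfolding mixed_single_def by (auto intro: prob_space_return simp: AE_return)
  have "\<not> nash_single 1 1 2 1 (marginal M 1) (marginal M 1)"
  proof
    assume "nash_single 1 1 2 1 (marginal M 1) (marginal M 1)"
    then have "exp_util us (return borel 1) U \<le> exp_util us U U"
      using ms unfolding nash_single_def nash_def marg_M by blast
    then show False using dev_single eqm_single by simp
  qed
  then show ?thesis
    using nash_two_M
    by (intro exI[of _ 1] exI[of _ 2] exI[of _ M] exI[of _ "1::nat"]) auto
qed

end
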